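(* Let $G$ be an abelian group with torsion subgroup $T$. If both $T$ and $G/T$ are strongly co-Hopfian, then $G$ is strongly co-Hopfian.
   Context: All groups are abelian. A group $G$ is strongly co-Hopfian if for every endomorphism $f$ of $G$ there is $n\in\mathbb N$ with $f^n(G)=f^{n+1}(G)$. $T$ denotes the maximal torsion subgroup of $G$. *)

theory Defs
  imports "HOL-Algebra.Algebra"
begin

definition torsion :: "('a, 'b) monoid_scheme \<Rightarrow> 'a set" where
  "torsion G = {x \<in> carrier G. \<exists>n::nat. n > 0 \<and> x [^]\<^bsub>G\<^esub> n = \<one>\<^bsub>G\<^esub>}"

definition strongly_co_hopfian :: "('a, 'b) monoid_scheme \<Rightarrow> bool" where
  "strongly_co_hopfian G \<longleftrightarrow>
     (\<forall>f \<in> hom G G. \<exists>n::nat. (f ^^ n) ` carrier G = (f ^^ Suc n) ` carrier G)"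

end

theory Submission
  imports Defs
begin

context comm_group
begin

lemma torsion_subgroup: "subgroup (torsion G) G"
proof
  show "torsion G \<subseteq> carrier G" by (auto simp: torsion_def)
  show "\<one> \<in> torsion G" unfolding torsion_def by (rule CollectI, rule conjI, simp, rule exI[of _ 1], simp)
next
  fix x y assume x: "x \<in> torsion G" and y: "y \<in> torsion G"
  then obtain n m :: nat where n: "n > 0" "x [^] n = \<one>" and m: "m > 0" "y [^] m = \<one>"
    and xc: "x \<in> carrier G" and yc: "y \<in> carrier G" by (auto simp: torsion_def)
  have "(x \<otimes> y) [^] (n*m) = x [^] (n*m) \<otimes> y [^] (n*m)"
    by (rule pow_mult_distrib[OF m_comm[OF xc yc] xc yc])
  also have "\<dots> = \<one>"
  proof -
    have "x [^] (n*m) = (x [^] n) [^] m" using xc by (simp only: nat_pow_pow)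
    then have 1: "x [^] (n*m) = \<one>" using n(2) by simp
    have "y [^] (n*m) = (y [^] m) [^] n" using yc by (simp only: nat_pow_pow mult.commute)
    then have 2: "y [^] (n*m) = \<one>" using m(2) by simp
    show ?thesis by (simp only: 1 2 l_one one_closed)
  qed
  finally have "(x \<otimes> y) [^] (n*m) = \<one>" .
  moreover have "n*m > 0" using n m by simp
  ultimately show "x \<otimes> y \<in> torsion G" using xc yc unfolding torsion_def by blast
next
  fix x assume x: "x \<in> torsion G"
  then obtain n :: nat where n: "n > 0" "x [^] n = \<one>" and xc: "x \<in> carrier G" by (auto simp: torsion_def)
  have "inv x [^] n = inv (x [^] n)" using xc by (rule nat_pow_inv)
  then have "inv x [^] n = \<one>" using n(2) by simp
  then show "inv x \<in> torsion G" using n xc by (auto simp: torsion_def)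
qed

lemma hom_torsion: assumes f: "f \<in> hom G G" and x: "x \<in> torsion G" shows "f x \<in> torsion G"
proof -
  obtain n :: nat where n: "n > 0" "x [^] n = \<one>" and xc: "x \<in> carrier G" using x by (auto simp: torsion_def)
  interpret gh: group_hom G G f using f by (simp add: group_hom_def group_hom_axioms_def is_group)
  have "f x [^] n = f (x [^] n)" using xc by (simp only: gh.hom_nat_pow)
  then have "f x [^] n = \<one>" using n(2) by simp
  then show ?thesis using n xc f by (auto simp: torsion_def hom_in_carrier)
qed

lemma funpow_hom: "f \<in> hom G G \<Longrightarrow> (f ^^ n) \<in> hom G G"
proof (induction n)
  case 0 then show ?case by (auto simp: hom_def)
next
  case (Suc n)
  then have "f ^^ n \<in> hom G G" by blast
  then have "f \<circ> (f ^^ n) \<in> hom G G" using Suc.prems by (rule Group.hom_compose)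
  then show ?case by (simp only: funpow.simps(2))
qed

lemma hom_inv': "g \<in> hom G G \<Longrightarrow> x \<in> carrier G \<Longrightarrow> g (inv x) = inv (g x)"
  by (simp add: group_hom.hom_inv group_hom_axioms_def group_hom_def is_group)

lemma funpow_comb: "(f ^^ m) ((f ^^ n) x) = (f ^^ (m + n)) x"
  by (simp add: funpow_add)

lemma funpow_comb': "m + n = k \<Longrightarrow> (f ^^ m) ((f ^^ n) x) = (f ^^ k) x"
  using funpow_comb by metis

lemma cancel_lemma: "a \<in> carrier G \<Longrightarrow> c \<in> carrier G \<Longrightarrow> d \<in> carrier G \<Longrightarrow>
   (a \<otimes> inv c) \<otimes> (c \<otimes> inv d) = a \<otimes> inv d"
  by (simp add: m_assoc[symmetric]) (simp add: m_assoc)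

lemma cancel_lemma2: "a \<in> carrier G \<Longrightarrow> c \<in> carrier G \<Longrightarrow>
   (a \<otimes> inv c) \<otimes> c = a"
  by (simp add: m_assoc)

lemma main:
  assumes hT: "strongly_co_hopfian (G\<lparr>carrier := torsion G\<rparr>)"
    and hQ: "strongly_co_hopfian (G Mod torsion G)"
  shows "strongly_co_hopfian G"
  unfolding strongly_co_hopfian_def
proof
  fix f assume f: "f \<in> hom G G"
  define T where "T = torsion G"
  have sT: "subgroup T G" unfolding T_def by (rule torsion_subgroup)
  interpret sub: subgroup T G by (rule sT)
  interpret nor: normal T G using sT by (rule subgroup_imp_normal)
  have fk: "(f ^^ k) \<in> hom G G" for k using f by (rule funpow_hom)
  have fkc: "(f ^^ k) x \<in> carrier G" if "x \<in> carrier G" for k x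
    using fk that by (rule hom_in_carrier)
  have fkT: "(f ^^ k) x \<in> T" if "x \<in> T" for k x
    using fk that unfolding T_def by (rule hom_torsion)
  have fkm: "(f ^^ k) (x \<otimes> y) = (f ^^ k) x \<otimes> (f ^^ k) y" if "x \<in> carrier G" "y \<in> carrier G" for k x y
    using fk that by (rule hom_mult)
  have fki: "(f ^^ k) (inv x) = inv ((f ^^ k) x)" if "x \<in> carrier G" for k x
    using fk that by (rule hom_inv')
  have fTh: "f \<in> hom (G\<lparr>carrier := T\<rparr>) (G\<lparr>carrier := T\<rparr>)"
    unfolding hom_def using f hom_torsion[OF f] sub.subset
    by (auto simp: T_def hom_mult)
  then obtain a where a: "(f ^^ a) ` T = (f ^^ Suc a) ` T"
    using hT unfolding strongly_co_hopfian_def T_def by auto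
  have Tstab: "(f ^^ a) ` T = (f ^^ (a + j)) ` T" for j
  proof (induction j)
    case 0 then show ?case by simp
  next
    case (Suc j)
    have "f ^^ (a + Suc j) = (f ^^ j) \<circ> (f ^^ Suc a)" by (metis funpow_add add.commute add_Suc_right add_Suc)
    then have "(f ^^ (a + Suc j)) ` T = (f ^^ j) ` ((f ^^ Suc a) ` T)"
      by (simp add: image_comp)
    also have "\<dots> = (f ^^ j) ` ((f ^^ a) ` T)" using a by simp
    also have "\<dots> = (f ^^ (a + j)) ` T"
      by (metis image_comp funpow_add add.commute)
    finally show ?case using Suc by simp
  qed
  define F where "F C = T #> f (SOME x. x \<in> C)" for C
  have Fx: "F (T #> x) = T #> f x" if x: "x \<in> carrier G" for x
  proof -
    define y where "y = (SOME y. y \<in> T #> x)"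
    have "x \<in> T #> x" using x sT by (rule rcos_self)
    then have y: "y \<in> T #> x" unfolding y_def by (rule someI)
    have yc: "y \<in> carrier G" using sub.elemrcos_carrier[OF is_group x y] .
    have "y \<otimes> inv x \<in> T" using sub.rcos_module_imp[OF is_group x y] .
    then have "f (y \<otimes> inv x) \<in> T" using hom_torsion[OF f] unfolding T_def by blast
    then have "f y \<otimes> inv (f x) \<in> T" using hom_mult[OF f] hom_inv'[OF f] x yc by simp
    then have "f y \<in> T #> f x"
      using sub.rcos_module_rev[OF is_group] hom_in_carrier[OF f] x yc by blast
    then have "T #> f x = T #> f y" using repr_independence hom_in_carrier[OF f] x sT by blast
    then show ?thesis unfolding F_def y_def by simp
  qed
  have FH: "F \<in> hom (G Mod T) (G Mod T)"
  proof -
    have "F (T #> x) \<in> carrier (G Mod T)" if "x \<in> carrier G" for x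
      using that Fx hom_in_carrier[OF f] by (simp add: carrier_FactGroup)
    moreover have "F ((T #> x) <#> (T #> y)) = F (T #> x) <#> F (T #> y)"
      if "x \<in> carrier G" "y \<in> carrier G" for x y
      using that Fx hom_in_carrier[OF f] nor.rcos_sum hom_mult[OF f] by simp
    ultimately show ?thesis unfolding hom_def by (auto simp: carrier_FactGroup)
  qed
  have Fn: "(F ^^ n) (T #> x) = T #> (f ^^ n) x" if "x \<in> carrier G" for n x
  proof (induction n)
    case 0 then show ?case by simp
  next
    case (Suc n) then show ?case using Fx fkc that by simp
  qed
  obtain b where b: "(F ^^ b) ` carrier (G Mod T) = (F ^^ Suc b) ` carrier (G Mod T)"
    using hQ FH unfolding strongly_co_hopfian_def T_def by auto
  have Hstab: "\<exists>z\<in>carrier G. (f ^^ b) x \<otimes> inv ((f ^^ Suc b) z) \<in> T" if x: "x \<in> carrier G" for x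
  proof -
    have "T #> x \<in> carrier (G Mod T)" using x by (simp add: carrier_FactGroup)
    then have "(F ^^ b) (T #> x) \<in> (F ^^ Suc b) ` carrier (G Mod T)" using b by blast
    then obtain z where z: "z \<in> carrier G" "(F ^^ b) (T #> x) = (F ^^ Suc b) (T #> z)"
      by (auto simp: carrier_FactGroup)
    then have "T #> (f ^^ b) x = T #> (f ^^ Suc b) z" using Fn[OF x, of b] Fn[OF z(1), of "Suc b"] by metis
    moreover have "(f ^^ b) x \<in> T #> (f ^^ b) x" using fkc[OF x] sT by (rule rcos_self)
    ultimately have "(f ^^ b) x \<in> T #> (f ^^ Suc b) z" by simp
    then have "(f ^^ b) x \<otimes> inv ((f ^^ Suc b) z) \<in> T"
      using sub.rcos_module_imp[OF is_group fkc[OF z(1)]] by blast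
    then show ?thesis using z by blast
  qed
  have Hstab2: "\<forall>x\<in>carrier G. \<exists>z\<in>carrier G. (f ^^ b) x \<otimes> inv ((f ^^ (b + j)) z) \<in> T" for j
  proof (induction j)
    case 0 then show ?case using fkc by (auto intro!: bexI)
  next
    case (Suc j)
    show ?case
    proof
      fix x assume x: "x \<in> carrier G"
      obtain z where z: "z \<in> carrier G" "(f ^^ b) x \<otimes> inv ((f ^^ (b + j)) z) \<in> T"
        using Suc x by blast
      obtain w where w: "w \<in> carrier G" "(f ^^ b) z \<otimes> inv ((f ^^ Suc b) w) \<in> T"
        using Hstab[OF z(1)] by blast
      have "(f ^^ j) ((f ^^ b) z \<otimes> inv ((f ^^ Suc b) w)) \<in> T" using fkT[OF w(2)] .
      moreover have "(f ^^ j) ((f ^^ b) z \<otimes> inv ((f ^^ Suc b) w)) = (f ^^ j) ((f ^^ b) z) \<otimes> inv ((f ^^ j) ((f ^^ Suc b) w))"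
        using fkm[OF fkc[OF z(1)] inv_closed[OF fkc[OF w(1)]]] fki[OF fkc[OF w(1)]] by metis
      moreover have "(f ^^ j) ((f ^^ b) z) = (f ^^ (b + j)) z" by (rule funpow_comb') simp
      moreover have "(f ^^ j) ((f ^^ Suc b) w) = (f ^^ (b + Suc j)) w" by (rule funpow_comb') simp
      ultimately have "(f ^^ (b + j)) z \<otimes> inv ((f ^^ (b + Suc j)) w) \<in> T" by simp
      then have "((f ^^ b) x \<otimes> inv ((f ^^ (b + j)) z)) \<otimes> ((f ^^ (b + j)) z \<otimes> inv ((f ^^ (b + Suc j)) w)) \<in> T"
        using z(2) sub.m_closed by blast
      then have "(f ^^ b) x \<otimes> inv ((f ^^ (b + Suc j)) w) \<in> T"
        by (simp only: cancel_lemma fkc x z(1) w(1))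
      then show "\<exists>z\<in>carrier G. (f ^^ b) x \<otimes> inv ((f ^^ (b + Suc j)) z) \<in> T" using w by blast
    qed
  qed
  show "\<exists>n. (f ^^ n) ` carrier G = (f ^^ Suc n) ` carrier G"
  proof (intro exI equalityI subsetI)
    fix y assume "y \<in> (f ^^ Suc (a + b)) ` carrier G"
    then obtain x where x: "x \<in> carrier G" "y = (f ^^ Suc (a + b)) x" by blast
    then have "y = (f ^^ (a + b)) (f x)" by (metis funpow_swap1 funpow.simps(2) o_apply)
    then show "y \<in> (f ^^ (a + b)) ` carrier G" using hom_in_carrier[OF f x(1)] by blast
  next
    fix y assume "y \<in> (f ^^ (a + b)) ` carrier G"
    then obtain x where x: "x \<in> carrier G" "y = (f ^^ (a + b)) x" by blast
    obtain z where z: "z \<in> carrier G" "(f ^^ b) x \<otimes> inv ((f ^^ (b + Suc b)) z) \<in> T"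
      using Hstab2[of "Suc b"] x(1) by blast
    define t0 where "t0 = (f ^^ b) x \<otimes> inv ((f ^^ (b + Suc b)) z)"
    have t0: "t0 \<in> T" "t0 \<in> carrier G" using z(2) sub.subset unfolding t0_def by auto
    have "(f ^^ a) t0 \<in> (f ^^ (a + Suc b)) ` T" using Tstab[of "Suc b"] t0(1) by blast
    then obtain t1 where t1: "t1 \<in> T" "(f ^^ a) t0 = (f ^^ (a + Suc b)) t1" by blast
    have t1c: "t1 \<in> carrier G" using t1 sub.subset by auto
    have fbx: "(f ^^ b) x = t0 \<otimes> (f ^^ (b + Suc b)) z"
      unfolding t0_def by (simp only: cancel_lemma2 fkc x(1) z(1))
    have "y = (f ^^ a) ((f ^^ b) x)" using x(2) funpow_comb'[of a b "a+b" f x] by simp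
    also have "\<dots> = (f ^^ a) t0 \<otimes> (f ^^ a) ((f ^^ (b + Suc b)) z)"
      by (subst fbx) (rule fkm[OF t0(2) fkc[OF z(1)]])
    also have "\<dots> = (f ^^ Suc (a + b)) t1 \<otimes> (f ^^ Suc (a + b)) ((f ^^ b) z)"
    proof -
      have "(f ^^ a) ((f ^^ (b + Suc b)) z) = (f ^^ (a + (b + Suc b))) z" by (rule funpow_comb') simp
      moreover have "(f ^^ Suc (a + b)) ((f ^^ b) z) = (f ^^ (a + (b + Suc b))) z" by (rule funpow_comb') simp
      moreover have "(f ^^ (a + Suc b)) t1 = (f ^^ Suc (a + b)) t1" by simp
      ultimately show ?thesis using t1(2) by simp
    qed
    also have "\<dots> = (f ^^ Suc (a + b)) (t1 \<otimes> (f ^^ b) z)"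
      by (rule fkm[OF t1c fkc[OF z(1)], symmetric])
    finally show "y \<in> (f ^^ Suc (a + b)) ` carrier G"
      by (rule image_eqI[OF _ m_closed[OF t1c fkc[OF z(1)]]])
  qed
qed

end

theorem mainTheorem4:
  fixes G :: "('a, 'b) monoid_scheme"
  assumes "comm_group G"
    and "strongly_co_hopfian (G\<lparr>carrier := torsion G\<rparr>)"
    and "strongly_co_hopfian (G Mod torsion G)"
  shows "strongly_co_hopfian G"
  using comm_group.main[OF assms] .

end
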